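(* For the concurrent graph sharing game, \[ \inf_{(G,w)} v(G,w) = \tfrac{1}{3} \qquad\text{and}\qquad \inf_{(G,w),\ G \text{ is a tree}} v(G,w) = \tfrac{1}{2}, \] where the first infimum ranges over all instances $(G,w)$ and the second over all instances $(G,w)$ in which $G$ is a tree.
   Context: An instance of the concurrent graph sharing game is a pair $(G,w)$ where $G=(V,E)$ is a finite connected graph and $w:V\to(0,1]$ is a positive vertex-weight function with $\sum_{v\in V} w(v)=1$; for $A\subseteq V$ write $w(A)=\sum_{a\in A}w(a)$. It is assumed throughout that no two distinct subsets of vertices have the same total weight, so ties never occur. The game is played by two players, 1st and 2nd. 1st begins by taking any vertex. In each subsequent round, the player whose sum of weights of vertices taken so far is smaller takes a not-yet-taken vertex adjacent to some already taken vertex (so the set of all taken vertices is always connected, and exactly one new vertex is taken per round); the game ends when all vertices are taken. For a vertex $a$, let $F_a$ and $S_a$ be the sets of vertices taken by 1st and 2nd, respectively, when 1st starts with $a$ and from then on 1st plays to maximize $w(F_a)$ and 2nd plays to maximize $w(S_a)$. The value of the instance is $v(G,w)=\max_{a\in V} w(F_a)$, the maximum total weight 1st can guarantee to take. *)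

theory Defs
  imports Complex_Main
begin

definition graph_connected :: "nat set \<Rightarrow> (nat \<Rightarrow> nat \<Rightarrow> bool) \<Rightarrow> bool" where
  "graph_connected V E \<longleftrightarrow> (\<forall>u\<in>V. \<forall>v\<in>V. E\<^sup>*\<^sup>* u v)"

definition simple_graph :: "nat set \<Rightarrow> (nat \<Rightarrow> nat \<Rightarrow> bool) \<Rightarrow> bool" where
  "simple_graph V E \<longleftrightarrow> finite V \<and> V \<noteq> {} \<and>
     (\<forall>u v. E u v \<longrightarrow> u \<in> V \<and> v \<in> V) \<and>
     (\<forall>u v. E u v \<longrightarrow> E v u) \<and> (\<forall>v. \<not> E v v)"

definition has_cycle :: "nat set \<Rightarrow> (nat \<Rightarrow> nat \<Rightarrow> bool) \<Rightarrow> bool" where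
  "has_cycle V E \<longleftrightarrow> (\<exists>xs. length xs \<ge> 3 \<and> distinct xs \<and> set xs \<subseteq> V \<and>
     (\<forall>i. Suc i < length xs \<longrightarrow> E (xs ! i) (xs ! Suc i)) \<and> E (last xs) (hd xs))"

definition is_tree :: "nat set \<Rightarrow> (nat \<Rightarrow> nat \<Rightarrow> bool) \<Rightarrow> bool" where
  "is_tree V E \<longleftrightarrow> graph_connected V E \<and> \<not> has_cycle V E"

definition game_instance :: "nat set \<Rightarrow> (nat \<Rightarrow> nat \<Rightarrow> bool) \<Rightarrow> (nat \<Rightarrow> real) \<Rightarrow> bool" where
  "game_instance V E w \<longleftrightarrow> simple_graph V E \<and> graph_connected V E \<and>
     (\<forall>v\<in>V. 0 < w v \<and> w v \<le> 1) \<and> sum w V = 1 \<and>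
     (\<forall>A B. A \<subseteq> V \<longrightarrow> B \<subseteq> V \<longrightarrow> A \<noteq> B \<longrightarrow> sum w A \<noteq> sum w B)"

definition moves :: "nat set \<Rightarrow> (nat \<Rightarrow> nat \<Rightarrow> bool) \<Rightarrow> nat set \<Rightarrow> nat set \<Rightarrow> nat set" where
  "moves V E F S = {v \<in> V - (F \<union> S). \<exists>u \<in> F \<union> S. E u v}"

text \<open>play n V E w F S: the final pair (set of 1st, set of 2nd) reached from position
  (F,S) when both players play optimally (1st maximizing the final weight of his set,
  2nd maximizing the final weight of hers), with at most n further rounds.  Under the distinct-subset-weight
  assumption optimal choices lead to a unique outcome.\<close>
primrec play :: "nat \<Rightarrow> nat set \<Rightarrow> (nat \<Rightarrow> nat \<Rightarrow> bool) \<Rightarrow> (nat \<Rightarrow> real) \<Rightarrow>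
    nat set \<Rightarrow> nat set \<Rightarrow> nat set \<times> nat set" where
  "play 0 V E w F S = (F, S)"
| "play (Suc n) V E w F S =
     (if moves V E F S = {} then (F, S)
      else if sum w F < sum w S then
        play n V E w (insert (arg_max_on (\<lambda>v. sum w (fst (play n V E w (insert v F) S)))
                                  (moves V E F S)) F) S
      else
        play n V E w F (insert (arg_max_on (\<lambda>v. sum w (snd (play n V E w F (insert v S))))
                                  (moves V E F S)) S))"

definition first_set :: "nat set \<Rightarrow> (nat \<Rightarrow> nat \<Rightarrow> bool) \<Rightarrow> (nat \<Rightarrow> real) \<Rightarrow> nat \<Rightarrow> nat set" where
  "first_set V E w a = fst (play (card V - 1) V E w {a} {})"

definition game_value :: "nat set \<Rightarrow> (nat \<Rightarrow> nat \<Rightarrow> bool) \<Rightarrow> (nat \<Rightarrow> real) \<Rightarrow> real" where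
  "game_value V E w = Max ((\<lambda>a. sum w (first_set V E w a)) ` V)"

end

theory Submission
  imports Defs "HOL-Library.Nat_Bijection"
begin


lemma arg_max_on_props:
  fixes f :: "'b \<Rightarrow> real"
  assumes "finite M" "M \<noteq> {}"
  shows "arg_max_on f M \<in> M \<and> (\<forall>y\<in>M. f y \<le> f (arg_max_on f M))"
proof -
  obtain x where x: "x \<in> M" "f x = Max (f ` M)"
  proof -
    have "Max (f ` M) \<in> f ` M" using assms by (intro Max_in) auto
    thus ?thesis using that by (metis imageE)
  qed
  hence x2: "\<forall>y\<in>M. f y \<le> f x" using assms by simp
  have "is_arg_max f (\<lambda>x. x \<in> M) x" using x x2 by (auto simp: is_arg_max_linorder)
  hence "is_arg_max f (\<lambda>x. x \<in> M) (arg_max_on f M)"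
    unfolding arg_max_on_def arg_max_def by (rule someI)
  thus ?thesis by (auto simp: is_arg_max_linorder)
qed

lemma arg_max_on_cong:
  assumes "\<forall>x\<in>M. f x = g x"
  shows "arg_max_on f M = arg_max_on g M"
proof -
  have "is_arg_max f (\<lambda>x. x \<in> M) = is_arg_max g (\<lambda>x. x \<in> M)"
    using assms unfolding is_arg_max_def by (intro ext) auto
  thus ?thesis unfolding arg_max_on_def arg_max_def by simp
qed

lemma gi_simple: "game_instance V E w \<Longrightarrow> simple_graph V E"
  by (simp add: game_instance_def)
lemma gi_finite: "game_instance V E w \<Longrightarrow> finite V"
  by (simp add: game_instance_def simple_graph_def)
lemma gi_edge: "game_instance V E w \<Longrightarrow> E u v \<Longrightarrow> u \<in> V \<and> v \<in> V"
  by (simp add: game_instance_def simple_graph_def)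
lemma gi_sym: "game_instance V E w \<Longrightarrow> E u v \<Longrightarrow> E v u"
  by (simp add: game_instance_def simple_graph_def)
lemma gi_irrefl: "game_instance V E w \<Longrightarrow> \<not> E v v"
  by (simp add: game_instance_def simple_graph_def)
lemma gi_pos: "game_instance V E w \<Longrightarrow> v \<in> V \<Longrightarrow> 0 < w v"
  by (simp add: game_instance_def)
lemma gi_sum: "game_instance V E w \<Longrightarrow> sum w V = 1"
  by (simp add: game_instance_def)
lemma gi_dist: "game_instance V E w \<Longrightarrow> A \<subseteq> V \<Longrightarrow> B \<subseteq> V \<Longrightarrow> A \<noteq> B \<Longrightarrow> sum w A \<noteq> sum w B"
  by (simp add: game_instance_def)
lemma gi_conn: "game_instance V E w \<Longrightarrow> graph_connected V E"
  by (simp add: game_instance_def)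

lemma moves_sub: "moves V E F S \<subseteq> V - (F \<union> S)"
  by (auto simp: moves_def)

lemma finite_moves: "finite V \<Longrightarrow> finite (moves V E F S)"
  using moves_sub by (metis finite_Diff finite_subset)

lemma exists_cross_edge:
  assumes gi: "game_instance V E w" and T: "T \<subseteq> V" "T \<noteq> {}" "T \<noteq> V"
  shows "\<exists>u\<in>T. \<exists>v\<in>V - T. E u v"
proof -
  obtain u where u: "u \<in> T" using T by auto
  obtain v where v: "v \<in> V" "v \<notin> T" using T by auto
  have "E\<^sup>*\<^sup>* u v" using gi_conn[OF gi] u v T unfolding graph_connected_def by auto
  have "\<And>x. E\<^sup>*\<^sup>* u x \<Longrightarrow> x \<notin> T \<Longrightarrow> \<exists>a\<in>T. \<exists>b\<in>V - T. E a b"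
  proof -
    fix x assume "E\<^sup>*\<^sup>* u x" "x \<notin> T"
    thus "\<exists>a\<in>T. \<exists>b\<in>V - T. E a b"
    proof (induction rule: rtranclp_induct)
      case base thus ?case using u by simp
    next
      case (step y z)
      show ?case
      proof (cases "y \<in> T")
        case True thus ?thesis using step gi_edge[OF gi, of y z] by blast
      next
        case False thus ?thesis using step by blast
      qed
    qed
  qed
  thus ?thesis using \<open>E\<^sup>*\<^sup>* u v\<close> v by blast
qed

lemma moves_nonempty:
  assumes gi: "game_instance V E w" "F \<union> S \<subseteq> V" "F \<union> S \<noteq> {}" "F \<union> S \<noteq> V"
  shows "moves V E F S \<noteq> {}"
  using exists_cross_edge[OF assms] unfolding moves_def by blast

lemma moves_empty_full:
  assumes gi: "game_instance V E w" "F \<union> S \<subseteq> V" "F \<union> S \<noteq> {}" "moves V E F S = {}"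
  shows "F \<union> S = V"
  using moves_nonempty assms by blast

lemma play_Suc_F:
  "moves V E F S \<noteq> {} \<Longrightarrow> sum w F < sum w S \<Longrightarrow>
   play (Suc n) V E w F S = play n V E w (insert (arg_max_on (\<lambda>v. sum w (fst (play n V E w (insert v F) S))) (moves V E F S)) F) S"
  by simp

lemma play_Suc_S:
  "moves V E F S \<noteq> {} \<Longrightarrow> \<not> sum w F < sum w S \<Longrightarrow>
   play (Suc n) V E w F S = play n V E w F (insert (arg_max_on (\<lambda>v. sum w (snd (play n V E w F (insert v S)))) (moves V E F S)) S)"
  by simp

lemma play_inv:
  assumes gi: "game_instance V E w"
    and "F \<subseteq> V" "S \<subseteq> V" "F \<inter> S = {}" "Q F S"
    and stepF: "\<And>F S v. F \<subseteq> V \<Longrightarrow> S \<subseteq> V \<Longrightarrow> F \<inter> S = {} \<Longrightarrow> Q F S \<Longrightarrow>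
        v \<in> moves V E F S \<Longrightarrow> sum w F < sum w S \<Longrightarrow> Q (insert v F) S"
    and stepS: "\<And>F S v. F \<subseteq> V \<Longrightarrow> S \<subseteq> V \<Longrightarrow> F \<inter> S = {} \<Longrightarrow> Q F S \<Longrightarrow>
        v \<in> moves V E F S \<Longrightarrow> \<not> sum w F < sum w S \<Longrightarrow> Q F (insert v S)"
  shows "Q (fst (play n V E w F S)) (snd (play n V E w F S))"
  using assms(2-5)
proof (induction n arbitrary: F S)
  case 0 thus ?case by simp
next
  case (Suc n)
  have fin: "finite (moves V E F S)" using finite_moves gi_finite[OF gi] by blast
  show ?case
  proof (cases "moves V E F S = {}")
    case True thus ?thesis using Suc.prems by simp
  next
    case ne: False
    show ?thesis
    proof (cases "sum w F < sum w S")
      case True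
      define b where "b = arg_max_on (\<lambda>v. sum w (fst (play n V E w (insert v F) S))) (moves V E F S)"
      have b: "b \<in> moves V E F S" using arg_max_on_props[OF fin ne] b_def by blast
      hence bv: "b \<in> V" "b \<notin> F" "b \<notin> S" using moves_sub by blast+
      have "Q (fst (play n V E w (insert b F) S)) (snd (play n V E w (insert b F) S))"
        apply (rule Suc.IH) using Suc.prems bv stepF[OF _ _ _ _ b True] by auto
      thus ?thesis using play_Suc_F[OF ne True] b_def by metis
    next
      case False
      define b where "b = arg_max_on (\<lambda>v. sum w (snd (play n V E w F (insert v S)))) (moves V E F S)"
      have b: "b \<in> moves V E F S" using arg_max_on_props[OF fin ne] b_def by blast
      hence bv: "b \<in> V" "b \<notin> F" "b \<notin> S" using moves_sub by blast+
      have "Q (fst (play n V E w F (insert b S))) (snd (play n V E w F (insert b S)))"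
        apply (rule Suc.IH) using Suc.prems bv stepS[OF _ _ _ _ b False] by auto
      thus ?thesis using play_Suc_S[OF ne False] b_def by metis
    qed
  qed
qed

lemma play_basic:
  assumes gi: "game_instance V E w" and "F \<subseteq> V" "S \<subseteq> V" "F \<inter> S = {}"
  shows "F \<subseteq> fst (play n V E w F S) \<and> S \<subseteq> snd (play n V E w F S) \<and>
         fst (play n V E w F S) \<subseteq> V \<and> snd (play n V E w F S) \<subseteq> V \<and>
         fst (play n V E w F S) \<inter> snd (play n V E w F S) = {}"
  apply (rule play_inv[OF gi assms(2-4), where Q="\<lambda>F' S'. F \<subseteq> F' \<and> S \<subseteq> S' \<and> F' \<subseteq> V \<and> S' \<subseteq> V \<and> F' \<inter> S' = {}"])
  using assms moves_sub by blast+

lemma play_complete: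
  assumes gi: "game_instance V E w" and "F \<subseteq> V" "S \<subseteq> V" "F \<inter> S = {}" "F \<union> S \<noteq> {}"
    and "card (V - (F \<union> S)) \<le> n"
  shows "fst (play n V E w F S) \<union> snd (play n V E w F S) = V"
  using assms(2-6)
proof (induction n arbitrary: F S)
  case 0
  have "V - (F \<union> S) = {}" using 0 gi_finite[OF gi] by simp
  thus ?case using 0 by auto
next
  case (Suc n)
  have fin: "finite (moves V E F S)" using finite_moves gi_finite[OF gi] by blast
  show ?case
  proof (cases "moves V E F S = {}")
    case True thus ?thesis using Suc.prems moves_empty_full[OF gi] by simp
  next
    case ne: False
    have cardb: "\<And>b. b \<in> moves V E F S \<Longrightarrow> card (V - (insert b F \<union> S)) \<le> n"
                "\<And>b. b \<in> moves V E F S \<Longrightarrow> card (V - (F \<union> insert b S)) \<le> n"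
    proof -
      fix b assume b: "b \<in> moves V E F S"
      hence "b \<in> V - (F \<union> S)" using moves_sub by blast
      hence "card (V - (F \<union> S) - {b}) = card (V - (F \<union> S)) - 1"
        using gi_finite[OF gi] by simp
      moreover have "V - (insert b F \<union> S) = V - (F \<union> S) - {b}" "V - (F \<union> insert b S) = V - (F \<union> S) - {b}" by auto
      ultimately show "card (V - (insert b F \<union> S)) \<le> n" "card (V - (F \<union> insert b S)) \<le> n"
        using Suc.prems(5) by auto
    qed
    show ?thesis
    proof (cases "sum w F < sum w S")
      case True
      define b where "b = arg_max_on (\<lambda>v. sum w (fst (play n V E w (insert v F) S))) (moves V E F S)"
      have b: "b \<in> moves V E F S" using arg_max_on_props[OF fin ne] b_def by blast
      hence bv: "b \<in> V" "b \<notin> F" "b \<notin> S" using moves_sub by blast+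
      have "fst (play n V E w (insert b F) S) \<union> snd (play n V E w (insert b F) S) = V"
        apply (rule Suc.IH) using Suc.prems bv cardb[OF b] by auto
      thus ?thesis using play_Suc_F[OF ne True] b_def by metis
    next
      case False
      define b where "b = arg_max_on (\<lambda>v. sum w (snd (play n V E w F (insert v S)))) (moves V E F S)"
      have b: "b \<in> moves V E F S" using arg_max_on_props[OF fin ne] b_def by blast
      hence bv: "b \<in> V" "b \<notin> F" "b \<notin> S" using moves_sub by blast+
      have "fst (play n V E w F (insert b S)) \<union> snd (play n V E w F (insert b S)) = V"
        apply (rule Suc.IH) using Suc.prems bv cardb[OF b] by auto
      thus ?thesis using play_Suc_S[OF ne False] b_def by metis
    qed
  qed
qed

lemma play_sum1:
  assumes gi: "game_instance V E w" and "F \<subseteq> V" "S \<subseteq> V" "F \<inter> S = {}" "F \<union> S \<noteq> {}"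
    and "card (V - (F \<union> S)) \<le> n"
  shows "sum w (fst (play n V E w F S)) + sum w (snd (play n V E w F S)) = 1"
proof -
  have u: "fst (play n V E w F S) \<union> snd (play n V E w F S) = V" by (rule play_complete[OF assms])
  have d: "fst (play n V E w F S) \<inter> snd (play n V E w F S) = {}" using play_basic[OF gi assms(2-4)] by blast
  have f: "finite (fst (play n V E w F S))" "finite (snd (play n V E w F S))"
    using u gi_finite[OF gi] by (metis finite_Un)+
  have "sum w V = sum w (fst (play n V E w F S)) + sum w (snd (play n V E w F S))"
    using sum.union_disjoint[OF f d] u by simp
  thus ?thesis using gi_sum[OF gi] by simp
qed



lemma moves_comm: "moves V E S F = moves V E F S"
  by (auto simp: moves_def)

lemma play_swap:
  assumes gi: "game_instance V E w" and "F \<subseteq> V" "S \<subseteq> V" "F \<inter> S = {}" "F \<union> S \<noteq> {}"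
  shows "play n V E w S F = prod.swap (play n V E w F S)"
  using assms(2-5)
proof (induction n arbitrary: F S)
  case 0 thus ?case by simp
next
  case (Suc n)
  have fin: "finite (moves V E F S)" using finite_moves gi_finite[OF gi] by blast
  have neq: "sum w F \<noteq> sum w S"
    using gi_dist[OF gi Suc.prems(1,2)] Suc.prems by blast
  show ?case
  proof (cases "moves V E F S = {}")
    case True thus ?thesis using moves_comm[of V E S F] by simp
  next
    case ne: False
    have ne': "moves V E S F \<noteq> {}" using ne moves_comm by metis
    have mv: "\<And>v. v \<in> moves V E F S \<Longrightarrow> v \<in> V \<and> v \<notin> F \<and> v \<notin> S" using moves_sub by blast
    show ?thesis
    proof (cases "sum w F < sum w S")
      case True
      define b where "b = arg_max_on (\<lambda>v. sum w (fst (play n V E w (insert v F) S))) (moves V E F S)"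
      have b: "b \<in> moves V E F S" using arg_max_on_props[OF fin ne] b_def by blast
      have IHv: "\<And>v. v \<in> moves V E F S \<Longrightarrow> play n V E w S (insert v F) = prod.swap (play n V E w (insert v F) S)"
        using Suc.IH Suc.prems mv by (metis Int_insert_left_if0 Un_insert_left insert_not_empty insert_subset)
      have "arg_max_on (\<lambda>v. sum w (snd (play n V E w S (insert v F)))) (moves V E S F) = b"
        unfolding b_def moves_comm[of V E S F] by (rule arg_max_on_cong) (simp add: IHv)
      moreover have "\<not> sum w S < sum w F" using True by simp
      ultimately have "play (Suc n) V E w S F = play n V E w S (insert b F)"
        using play_Suc_S[OF ne'] by metis
      also have "\<dots> = prod.swap (play n V E w (insert b F) S)" using IHv[OF b] .
      also have "\<dots> = prod.swap (play (Suc n) V E w F S)" using play_Suc_F[OF ne True] b_def by metis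
      finally show ?thesis .
    next
      case False
      hence lt: "sum w S < sum w F" using neq by simp
      define b where "b = arg_max_on (\<lambda>v. sum w (snd (play n V E w F (insert v S)))) (moves V E F S)"
      have b: "b \<in> moves V E F S" using arg_max_on_props[OF fin ne] b_def by blast
      have IHv: "\<And>v. v \<in> moves V E F S \<Longrightarrow> play n V E w (insert v S) F = prod.swap (play n V E w F (insert v S))"
        using Suc.IH Suc.prems mv by (metis Int_insert_right_if0 Un_insert_right insert_not_empty insert_subset)
      have "arg_max_on (\<lambda>v. sum w (fst (play n V E w (insert v S) F))) (moves V E S F) = b"
        unfolding b_def moves_comm[of V E S F] by (rule arg_max_on_cong) (simp add: IHv)
      hence "play (Suc n) V E w S F = play n V E w (insert b S) F"
        using play_Suc_F[OF ne' lt] by metis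
      also have "\<dots> = prod.swap (play n V E w F (insert b S))" using IHv[OF b] .
      also have "\<dots> = prod.swap (play (Suc n) V E w F S)" using play_Suc_S[OF ne False] b_def by metis
      finally show ?thesis .
    qed
  qed
qed

lemma sum_ge_member:
  assumes gi: "game_instance V E w" "A \<subseteq> V" "m \<in> A"
  shows "w m \<le> sum w A"
proof -
  have "finite A" using gi_finite[OF gi(1)] assms(2) finite_subset by blast
  moreover have "\<forall>x\<in>A. 0 \<le> w x" using gi_pos[OF gi(1)] assms(2) by (meson less_imp_le subsetD)
  ultimately show ?thesis using member_le_sum[OF assms(3)] by blast
qed

lemma value_ge:
  assumes gi: "game_instance V E w" "a \<in> V"
  shows "sum w (first_set V E w a) \<le> game_value V E w"
  unfolding game_value_def using gi_finite[OF gi(1)] assms(2) by (intro Max_ge) auto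

lemma value_gt_third:
  assumes gi: "game_instance V E w"
  shows "game_value V E w > 1/3"
proof -
  have fin: "finite V" and ne: "V \<noteq> {}" using gi unfolding game_instance_def simple_graph_def by auto
  obtain m where m: "m \<in> V" "w m = Max (w ` V)"
  proof -
    have "Max (w ` V) \<in> w ` V" using fin ne by (intro Max_in) auto
    thus ?thesis using that by (metis imageE)
  qed
  have mmax: "\<And>v. v \<in> V \<Longrightarrow> w v \<le> w m" using m fin by simp
  define Q where "Q = (\<lambda>F S. m \<in> F \<and> (S = {} \<or> sum w S < sum w F + w m))"
  have Q: "Q (fst (play (card V - 1) V E w {m} {})) (snd (play (card V - 1) V E w {m} {}))"
  proof (rule play_inv[OF gi])
    show "{m} \<subseteq> V" "{} \<subseteq> V" "{m} \<inter> {} = {}" using m by auto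
    show "Q {m} {}" unfolding Q_def by simp
  next
    fix F S v assume h: "F \<subseteq> V" "S \<subseteq> V" "F \<inter> S = {}" "Q F S" "v \<in> moves V E F S" "sum w F < sum w S"
    have v: "v \<in> V" "v \<notin> F" using h(5) moves_sub by blast+
    have "finite F" using fin h(1) finite_subset by blast
    hence "sum w (insert v F) = w v + sum w F" using v by simp
    moreover have "w v > 0" using gi_pos[OF gi v(1)] .
    ultimately show "Q (insert v F) S" using h(4) unfolding Q_def by auto
  next
    fix F S v assume h: "F \<subseteq> V" "S \<subseteq> V" "F \<inter> S = {}" "Q F S" "v \<in> moves V E F S" "\<not> sum w F < sum w S"
    have v: "v \<in> V" "v \<notin> S" using h(5) moves_sub by blast+
    have "F \<noteq> S" using h(3,4) unfolding Q_def by auto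
    hence "sum w F \<noteq> sum w S" using gi_dist[OF gi h(1,2)] by blast
    hence lt: "sum w S < sum w F" using h(6) by simp
    have "finite S" using fin h(2) finite_subset by blast
    hence "sum w (insert v S) = w v + sum w S" using v by simp
    thus "Q F (insert v S)" using lt mmax[OF v(1)] h(4) unfolding Q_def by auto
  qed
  define F' where "F' = fst (play (card V - 1) V E w {m} {})"
  define S' where "S' = snd (play (card V - 1) V E w {m} {})"
  have "card (V - {m}) \<le> card V - 1" using fin m by simp
  hence s1: "sum w F' + sum w S' = 1"
    unfolding F'_def S'_def using play_sum1[OF gi, of "{m}" "{}"] m by auto
  have F'V: "F' \<subseteq> V" using play_basic[OF gi, of "{m}" "{}"] m unfolding F'_def by auto
  have mF: "m \<in> F'" "S' = {} \<or> sum w S' < sum w F' + w m" using Q unfolding Q_def F'_def S'_def by auto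
  have "w m \<le> sum w F'" using sum_ge_member[OF gi F'V mF(1)] .
  hence "sum w F' > 1/3" using mF(2) s1 gi_pos[OF gi m(1)] by auto
  moreover have "sum w (first_set V E w m) = sum w F'" unfolding first_set_def F'_def ..
  ultimately show ?thesis using value_ge[OF gi m(1)] by linarith
qed



lemma sink_exists:
  assumes fin: "finite V" and ne: "V \<noteq> {}"
    and Ein: "\<And>u v. E u v \<Longrightarrow> u \<in> V \<and> v \<in> V" and irr: "\<And>v. \<not> E v v"
    and RE: "\<And>u v. R u v \<Longrightarrow> E u v" and Ras: "\<And>u v. R u v \<Longrightarrow> \<not> R v u"
    and nc: "\<not> has_cycle V E"
  shows "\<exists>a\<in>V. \<forall>b. \<not> R a b"
proof (rule ccontr)
  assume "\<not> ?thesis"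
  hence all: "\<forall>a\<in>V. \<exists>b. R a b" by blast
  define f where "f = (\<lambda>a. SOME b. R a b)"
  obtain a0 where a0: "a0 \<in> V" using ne by auto
  define s where "s = (\<lambda>i. (f ^^ i) a0)"
  have sS: "s (Suc i) = f (s i)" for i unfolding s_def by simp
  have fR: "R x (f x)" if "x \<in> V" for x
  proof -
    have "\<exists>b. R x b" using all that by blast
    thus ?thesis unfolding f_def by (rule someI_ex)
  qed
  have sV: "s i \<in> V \<and> R (s i) (s (Suc i))" for i
  proof (induction i)
    case 0
    have "s 0 = a0" unfolding s_def by simp
    thus ?case using a0 sS fR by simp
  next
    case (Suc i)
    hence "s (Suc i) \<in> V" using RE Ein by blast
    thus ?case using sS fR by simp
  qed
  have "\<not> inj_on s {..card V}"
  proof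
    assume "inj_on s {..card V}"
    hence "card (s ` {..card V}) = card V + 1" by (simp add: card_image)
    moreover have "s ` {..card V} \<subseteq> V" using sV by auto
    hence "card (s ` {..card V}) \<le> card V" by (rule card_mono[OF fin])
    ultimately show False by linarith
  qed
  then obtain i j where ij: "i \<noteq> j" "s i = s j" unfolding inj_on_def by blast
  hence ex: "\<exists>j i. i < j \<and> s i = s j" by (metis linorder_neqE_nat)
  define J where "J = (LEAST j. \<exists>i<j. s i = s j)"
  have "\<exists>i<J. s i = s J" unfolding J_def using ex by (rule LeastI_ex)
  then obtain I where I: "I < J" "s I = s J" by blast
  have minJ: "s p \<noteq> s q" if "p < q" "q < J" for p q
  proof -
    have "\<not> (\<exists>i<q. s i = s q)" using not_less_Least[of q "\<lambda>j. \<exists>i<j. s i = s j"] that(2) unfolding J_def by blast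
    thus ?thesis using that(1) by blast
  qed
  define xs where "xs = map s [I..<J]"
  have len: "length xs = J - I" unfolding xs_def by simp
  have nth: "\<And>k. k < J - I \<Longrightarrow> xs ! k = s (I + k)" unfolding xs_def by simp
  have "J - I \<noteq> 1"
  proof
    assume "J - I = 1" hence "J = Suc I" by simp
    thus False using I sV[of I] RE irr by metis
  qed
  moreover have "J - I \<noteq> 2"
  proof
    assume "J - I = 2" hence "J = Suc (Suc I)" by simp
    thus False using I sV[of I] sV[of "Suc I"] Ras by metis
  qed
  ultimately have l3: "length xs \<ge> 3" using I len by linarith
  have dist: "distinct xs"
    unfolding distinct_conv_nth len
  proof (intro allI impI)
    fix p q assume "p < J - I" "q < J - I" "p \<noteq> q"
    show "xs ! p \<noteq> xs ! q"
    proof (cases "p < q")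
      case True thus ?thesis using nth \<open>p < J - I\<close> \<open>q < J - I\<close> minJ[of "I+p" "I+q"] by simp
    next
      case False hence "q < p" using \<open>p \<noteq> q\<close> by simp
      thus ?thesis using nth \<open>p < J - I\<close> \<open>q < J - I\<close> minJ[of "I+q" "I+p"] by (simp add: eq_commute)
    qed
  qed
  have setV: "set xs \<subseteq> V" unfolding xs_def using sV by auto
  have cons: "\<forall>k. Suc k < length xs \<longrightarrow> E (xs ! k) (xs ! Suc k)"
  proof (intro allI impI)
    fix k assume "Suc k < length xs"
    hence "xs ! k = s (I + k)" "xs ! Suc k = s (Suc (I + k))" using nth len by auto
    thus "E (xs ! k) (xs ! Suc k)" using sV[of "I+k"] RE by simp
  qed
  have "xs \<noteq> []" using l3 by auto
  have "last xs = s (J - 1)" unfolding xs_def using I by (simp add: last_map)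
  moreover have "hd xs = s I" unfolding xs_def using I by (simp add: hd_map upt_conv_Cons)
  moreover have "E (s (J - 1)) (s J)"
  proof -
    have "J = Suc (J - 1)" using I by simp
    thus ?thesis using sV[of "J - 1"] RE by metis
  qed
  ultimately have "E (last xs) (hd xs)" using I by simp
  hence "has_cycle V E" unfolding has_cycle_def using l3 dist setV cons by blast
  thus False using nc by simp
qed

lemma tree_value:
  assumes gi: "game_instance V E w" and tr: "is_tree V E"
  shows "game_value V E w > 1/2"
proof -
  have fin: "finite V" and ne: "V \<noteq> {}" using gi unfolding game_instance_def simple_graph_def by auto
  show ?thesis
  proof (cases "card V = 1")
    case True
    then obtain a where a: "V = {a}" by (metis card_1_singletonE)
    have "first_set V E w a = {a}" unfolding first_set_def using True by simp
    moreover have "w a = 1" using gi_sum[OF gi] a by simp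
    ultimately show ?thesis using value_ge[OF gi, of a] a by simp
  next
    case False
    moreover have "card V \<noteq> 0" using fin ne by simp
    ultimately have c2: "card V \<ge> 2" by linarith
    define m where "m = card V - 2"
    have cm: "card V - 1 = Suc m" using c2 unfolding m_def by simp
    define g where "g = (\<lambda>a b. sum w (fst (play m V E w {a} {b})))"
    have facts: "g a b + g b a = 1 \<and> g a b \<noteq> 1/2" if ab: "E a b" for a b
    proof -
      have av: "a \<in> V" "b \<in> V" using gi_edge[OF gi ab] by auto
      have abne: "a \<noteq> b" using ab gi_irrefl[OF gi] by auto
      have h: "{a} \<subseteq> V" "{b} \<subseteq> V" "{a} \<inter> {b} = {}" "{a} \<union> {b} \<noteq> {}" using av abne by auto
      have "card (V - {a, b}) = card V - 2" using av abne fin by (simp add: card_Diff_subset)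
      moreover have "V - ({a} \<union> {b}) = V - {a, b}" by auto
      ultimately have hc: "card (V - ({a} \<union> {b})) \<le> m" unfolding m_def by simp
      have sw: "play m V E w {b} {a} = prod.swap (play m V E w {a} {b})" by (rule play_swap[OF gi h])
      have s1: "g a b + g b a = 1" unfolding g_def sw using play_sum1[OF gi h hc] by simp
      have pb: "fst (play m V E w {a} {b}) \<subseteq> V" "snd (play m V E w {a} {b}) \<subseteq> V"
        "fst (play m V E w {a} {b}) \<inter> snd (play m V E w {a} {b}) = {}"
        using play_basic[OF gi h(1-3), of m] by auto
      have un: "fst (play m V E w {a} {b}) \<union> snd (play m V E w {a} {b}) = V"
        by (rule play_complete[OF gi h hc])
      have "fst (play m V E w {a} {b}) \<noteq> snd (play m V E w {a} {b})" using pb(3) un ne by auto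
      hence "g a b \<noteq> g b a" unfolding g_def sw using gi_dist[OF gi pb(1,2)] by simp
      thus ?thesis using s1 by auto
    qed
    define R where "R = (\<lambda>a b. E a b \<and> g a b < 1/2)"
    have "\<exists>a\<in>V. \<forall>b. \<not> R a b"
    proof (rule sink_exists[OF fin ne])
      show "\<And>u v. E u v \<Longrightarrow> u \<in> V \<and> v \<in> V" using gi_edge[OF gi] by blast
      show "\<And>v. \<not> E v v" using gi_irrefl[OF gi] by blast
      show "\<And>u v. R u v \<Longrightarrow> E u v" unfolding R_def by blast
      show "\<And>u v. R u v \<Longrightarrow> \<not> R v u" unfolding R_def using facts by fastforce
      show "\<not> has_cycle V E" using tr unfolding is_tree_def by blast
    qed
    then obtain a where a: "a \<in> V" "\<forall>b. \<not> R a b" by blast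
    have "{a} \<noteq> V" using c2 by auto
    hence mne: "moves V E {a} {} \<noteq> {}"
      using moves_nonempty[OF gi, of "{a}" "{}"] a by auto
    have nlt: "\<not> sum w {a} < sum w {}" using gi_pos[OF gi a(1)] by simp
    define b where "b = arg_max_on (\<lambda>v. sum w (snd (play m V E w {a} (insert v {})))) (moves V E {a} {})"
    have "b \<in> moves V E {a} {}" using arg_max_on_props[OF finite_moves[OF fin] mne] b_def by blast
    hence ab: "E a b" unfolding moves_def by auto
    have "first_set V E w a = fst (play m V E w {a} {b})"
      unfolding first_set_def cm using play_Suc_S[OF mne nlt, of m] b_def by simp
    hence "sum w (first_set V E w a) = g a b" unfolding g_def by simp
    moreover have "g a b > 1/2" using a(2) facts[OF ab] ab unfolding R_def by auto
    ultimately show ?thesis using value_ge[OF gi a(1)] by linarith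
  qed
qed



primrec ub :: "nat \<Rightarrow> nat set \<Rightarrow> (nat \<Rightarrow> nat \<Rightarrow> bool) \<Rightarrow> (nat \<Rightarrow> real) \<Rightarrow> real \<Rightarrow> nat set \<Rightarrow> nat set \<Rightarrow> bool" where
  "ub 0 V E w c F S = (sum w F \<le> c)"
| "ub (Suc n) V E w c F S =
     (if moves V E F S = {} then sum w F \<le> c
      else if sum w F < sum w S then (\<forall>v\<in>moves V E F S. ub n V E w c (insert v F) S)
      else (\<exists>v\<in>moves V E F S. ub n V E w c F (insert v S)))"

lemma ub_sound:
  assumes gi: "game_instance V E w" and "F \<subseteq> V" "S \<subseteq> V" "F \<inter> S = {}" "F \<union> S \<noteq> {}"
    and "card (V - (F \<union> S)) \<le> n" and "ub n V E w c F S"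
  shows "sum w (fst (play n V E w F S)) \<le> c"
  using assms(2-7)
proof (induction n arbitrary: F S)
  case 0 thus ?case by simp
next
  case (Suc n)
  have fin: "finite (moves V E F S)" using finite_moves gi_finite[OF gi] by blast
  show ?case
  proof (cases "moves V E F S = {}")
    case True thus ?thesis using Suc.prems by simp
  next
    case ne: False
    have mv: "\<And>v. v \<in> moves V E F S \<Longrightarrow> v \<in> V \<and> v \<notin> F \<and> v \<notin> S" using moves_sub by blast
    have cardb: "\<And>b. b \<in> moves V E F S \<Longrightarrow> card (V - (insert b F \<union> S)) \<le> n"
                "\<And>b. b \<in> moves V E F S \<Longrightarrow> card (V - (F \<union> insert b S)) \<le> n"
    proof -
      fix b assume b: "b \<in> moves V E F S"
      hence "b \<in> V - (F \<union> S)" using moves_sub by blast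
      hence "card (V - (F \<union> S) - {b}) = card (V - (F \<union> S)) - 1"
        using gi_finite[OF gi] by simp
      moreover have "V - (insert b F \<union> S) = V - (F \<union> S) - {b}" "V - (F \<union> insert b S) = V - (F \<union> S) - {b}" by auto
      ultimately show "card (V - (insert b F \<union> S)) \<le> n" "card (V - (F \<union> insert b S)) \<le> n"
        using Suc.prems(5) by auto
    qed
    show ?thesis
    proof (cases "sum w F < sum w S")
      case True
      define b where "b = arg_max_on (\<lambda>v. sum w (fst (play n V E w (insert v F) S))) (moves V E F S)"
      have b: "b \<in> moves V E F S" using arg_max_on_props[OF fin ne] b_def by blast
      have "ub n V E w c (insert b F) S" using Suc.prems(6) ne True b by simp
      hence "sum w (fst (play n V E w (insert b F) S)) \<le> c"
        using Suc.IH[of "insert b F" S] Suc.prems mv[OF b] cardb[OF b] by auto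
      thus ?thesis using play_Suc_F[OF ne True] b_def by metis
    next
      case False
      define b where "b = arg_max_on (\<lambda>v. sum w (snd (play n V E w F (insert v S)))) (moves V E F S)"
      have bb: "b \<in> moves V E F S \<and> (\<forall>y\<in>moves V E F S. sum w (snd (play n V E w F (insert y S))) \<le> sum w (snd (play n V E w F (insert b S))))"
        unfolding b_def by (rule arg_max_on_props[OF fin ne])
      hence b: "b \<in> moves V E F S" and bmax: "\<forall>y\<in>moves V E F S. sum w (snd (play n V E w F (insert y S))) \<le> sum w (snd (play n V E w F (insert b S)))"
        by blast+
      obtain v where v: "v \<in> moves V E F S" "ub n V E w c F (insert v S)" using Suc.prems(6) ne False by auto
      have hv: "F \<subseteq> V" "insert v S \<subseteq> V" "F \<inter> insert v S = {}" "F \<union> insert v S \<noteq> {}" using Suc.prems mv[OF v(1)] by auto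
      have hb: "F \<subseteq> V" "insert b S \<subseteq> V" "F \<inter> insert b S = {}" "F \<union> insert b S \<noteq> {}" using Suc.prems mv[OF b] by auto
      have "sum w (fst (play n V E w F (insert v S))) \<le> c"
        using Suc.IH[OF hv cardb(2)[OF v(1)] v(2)] .
      moreover have "sum w (fst (play n V E w F (insert v S))) + sum w (snd (play n V E w F (insert v S))) = 1"
        by (rule play_sum1[OF gi hv cardb(2)[OF v(1)]])
      moreover have "sum w (fst (play n V E w F (insert b S))) + sum w (snd (play n V E w F (insert b S))) = 1"
        by (rule play_sum1[OF gi hb cardb(2)[OF b]])
      moreover have "sum w (snd (play n V E w F (insert v S))) \<le> sum w (snd (play n V E w F (insert b S)))"
        using bmax v(1) by blast
      ultimately have "sum w (fst (play n V E w F (insert b S))) \<le> c" by linarith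
      thus ?thesis using play_Suc_S[OF ne False] b_def by metis
    qed
  qed
qed

definition E6 :: "nat \<Rightarrow> nat \<Rightarrow> bool" where
  "E6 u v = ((u,v) \<in> set [(0,1),(1,0),(0,4),(4,0),(0,5),(5,0),(1,2),(2,1),(1,3),(3,1),(1,4),(4,1),(2,5),(5,2),(4,5),(5,4)])"

definition P6 :: "nat \<Rightarrow> nat \<Rightarrow> nat" where
  "P6 k i = (if i = 0 then 10 else if i = 1 then 20 else if i = 2 then k + 5 else if i = 3 then k + 22
            else if i = 4 then k else if i = 5 then 13 else 0)"

definition N6 :: "nat \<Rightarrow> nat \<Rightarrow> nat" where "N6 k i = 64 * P6 k i + 2 ^ i"
definition D6 :: "nat \<Rightarrow> nat" where "D6 k = 192 * k + 4543"
definition w6 :: "nat \<Rightarrow> nat \<Rightarrow> real" where "w6 k i = real (N6 k i) / real (D6 k)"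
definition c6 :: "nat \<Rightarrow> real" where "c6 k = real (64 * k + 4203) / real (D6 k)"

lemma sum_w6: "sum (w6 k) A = real (sum (N6 k) A) / real (D6 k)"
  unfolding w6_def by (simp add: sum_divide_distrib)

lemma w6_less: "(sum (w6 k) A < sum (w6 k) B) = (sum (N6 k) A < sum (N6 k) B)"
  unfolding sum_w6 by (simp add: D6_def divide_less_cancel flip: of_nat_sum)

lemma div_le_nat: "0 < (d::real) \<Longrightarrow> (real a / d \<le> real b / d) = (a \<le> b)"
  by (simp add: divide_le_cancel)

lemma w6_le_c: "(sum (w6 k) A \<le> c6 k) = (sum (N6 k) A \<le> 64 * k + 4203)"
  unfolding sum_w6 c6_def by (rule div_le_nat) (simp add: D6_def)

lemma moves6: "moves {0..<6} E6 F S = set (filter (\<lambda>v. v \<notin> F \<and> v \<notin> S \<and> (\<exists>u\<in>F \<union> S. E6 u v)) [0..<6])"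
  unfolding moves_def by auto

lemma N6_vals: "N6 k 0 = 641" "N6 k 1 = 1282" "N6 k 2 = 64 * k + 324" "N6 k 3 = 64 * k + 1416"
  "N6 k 4 = 64 * k + 16" "N6 k 5 = 864"
  by (simp_all add: N6_def P6_def)




lemma set_encode_lt: "A \<subseteq> {..<n} \<Longrightarrow> set_encode A < 2 ^ n"
proof (induction n arbitrary: A)
  case 0 thus ?case by simp
next
  case (Suc n)
  have fin: "finite (A - {n})" using Suc.prems finite_subset by blast
  have "A - {n} \<subseteq> {..<n}" using Suc.prems by auto
  hence lt: "set_encode (A - {n}) < 2 ^ n" by (rule Suc.IH)
  have "set_encode A \<le> 2 ^ n + set_encode (A - {n})"
  proof (cases "n \<in> A")
    case True
    hence "A = insert n (A - {n})" by auto
    hence "set_encode A = 2 ^ n + set_encode (A - {n})" using fin by (metis Diff_iff insertI1 set_encode_insert)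
    thus ?thesis by simp
  next
    case False thus ?thesis by simp
  qed
  thus ?case using lt by simp
qed

lemma encode_inj:
  fixes N P :: "nat \<Rightarrow> nat" and M :: nat
  assumes "A \<subseteq> {..<n}" "B \<subseteq> {..<n}" "2 ^ n \<le> M" "\<forall>i. N i = M * P i + 2 ^ i"
    and eq: "sum N A = sum N B"
  shows "A = B"
proof -
  have fA: "finite A" "finite B" using assms(1,2) finite_subset by blast+
  have decomp: "sum N X = M * sum P X + set_encode X" for X
    using assms(4) by (simp add: sum.distrib sum_distrib_left set_encode_def)
  have "set_encode A < M" "set_encode B < M"
    using set_encode_lt[OF assms(1)] set_encode_lt[OF assms(2)] assms(3) by linarith+
  hence "sum N A mod M = set_encode A" "sum N B mod M = set_encode B" unfolding decomp by simp_all
  hence "set_encode A = set_encode B" using eq by simp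
  thus ?thesis using set_encode_eq[OF fA] by simp
qed

lemma gi_nat:
  fixes N P :: "nat \<Rightarrow> nat" and M D :: nat
  assumes sg: "simple_graph V E" and cn: "graph_connected V E" and Vn: "V \<subseteq> {..<n}" and M: "2 ^ n \<le> M"
    and N: "\<forall>i. N i = M * P i + 2 ^ i" and D: "D = sum N V"
  shows "game_instance V E (\<lambda>i. real (N i) / real D)"
proof -
  have fin: "finite V" and ne: "V \<noteq> {}" using sg unfolding simple_graph_def by auto
  have Npos: "N i > 0" for i using N by simp
  have ND: "v \<in> V \<Longrightarrow> N v \<le> D" for v unfolding D using fin by (intro member_le_sum) auto
  have Dpos: "D > 0" using ne ND Npos by (metis all_not_in_conv gr0I le_zero_eq)
  have sumw: "sum (\<lambda>i. real (N i) / real D) X = real (sum N X) / real D" for X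
    by (simp add: sum_divide_distrib)
  show ?thesis unfolding game_instance_def
  proof (intro conjI ballI allI impI)
    show "simple_graph V E" "graph_connected V E" by fact+
  next
    fix v assume "v \<in> V"
    show "0 < real (N v) / real D" using Npos Dpos by simp
    show "real (N v) / real D \<le> 1" using ND[OF \<open>v \<in> V\<close>] Dpos by simp
  next
    have "real D \<noteq> 0" using Dpos by simp
    thus "sum (\<lambda>i. real (N i) / real D) V = 1" unfolding sumw D[symmetric] by simp
  next
    fix A B assume h: "A \<subseteq> V" "B \<subseteq> V" "A \<noteq> B"
    show "sum (\<lambda>i. real (N i) / real D) A \<noteq> sum (\<lambda>i. real (N i) / real D) B"
    proof
      assume "sum (\<lambda>i. real (N i) / real D) A = sum (\<lambda>i. real (N i) / real D) B"
      hence h1: "real (sum N A) / real D = real (sum N B) / real D" unfolding sumw .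
      have "real D \<noteq> 0" using Dpos by simp
      hence "real (sum N A) = real (sum N B)"
        using h1 divide_cancel_right[of "real (sum N A)" "real D" "real (sum N B)"] by blast
      hence "sum N A = sum N B" by (simp only: of_nat_eq_iff)
      hence "A = B" using encode_inj[OF _ _ M N] h Vn by blast
      thus False using h by simp
    qed
  qed
qed

lemma value_le_ub:
  assumes gi: "game_instance V E w" and "\<forall>a\<in>V. ub (card V - 1) V E w c {a} {}"
  shows "game_value V E w \<le> c"
proof -
  have fin: "finite V" and ne: "V \<noteq> {}" using gi unfolding game_instance_def simple_graph_def by auto
  have "sum w (first_set V E w a) \<le> c" if a: "a \<in> V" for a
    unfolding first_set_def
  proof (rule ub_sound[OF gi])
    show "{a} \<subseteq> V" "{} \<subseteq> V" "{a} \<inter> {} = {}" "{a} \<union> {} \<noteq> {}" using a by auto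
    show "card (V - ({a} \<union> {})) \<le> card V - 1" using a fin by simp
    show "ub (card V - 1) V E w c {a} {}" using assms(2) a by blast
  qed
  thus ?thesis unfolding game_value_def using fin ne by (subst Max_le_iff) auto
qed

lemma E6_simple: "simple_graph {0..<6} E6"
  unfolding simple_graph_def E6_def by auto

lemma E6_conn: "graph_connected {0..<6} E6"
proof -
  have e: "E6 0 1" "E6 1 0" "E6 1 2" "E6 2 1" "E6 1 3" "E6 3 1" "E6 0 4" "E6 4 0" "E6 0 5" "E6 5 0"
    unfolding E6_def by simp_all
  have to0: "E6\<^sup>*\<^sup>* v 0 \<and> E6\<^sup>*\<^sup>* 0 v" if "v \<in> {0..<6}" for v
  proof -
    have "v = 0 \<or> v = 1 \<or> v = 2 \<or> v = 3 \<or> v = 4 \<or> v = 5" using that by auto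
    thus ?thesis using e by (auto intro: converse_rtranclp_into_rtranclp rtranclp.rtrancl_into_rtrancl)
  qed
  show ?thesis unfolding graph_connected_def using to0 by (meson rtranclp_trans)
qed

lemma N6_form: "\<forall>i. N6 k i = 64 * P6 k i + 2 ^ i" unfolding N6_def by simp

lemma D6_sum: "D6 k = sum (N6 k) {0..<6}"
  by (simp add: D6_def N6_def P6_def eval_nat_numeral)

lemma gi6: "game_instance {0..<6} E6 (w6 k)"
proof -
  have "w6 k = (\<lambda>i. real (N6 k i) / real (D6 k))" unfolding w6_def by simp
  moreover have "game_instance {0..<6} E6 (\<lambda>i. real (N6 k i) / real (D6 k))"
    by (rule gi_nat[OF E6_simple E6_conn _ _ N6_form D6_sum, of 6]) auto
  ultimately show ?thesis by simp
qed

lemma c6_bound: "k \<ge> 1 \<Longrightarrow> c6 k \<le> 1/3 + 15 / real k"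
  unfolding c6_def D6_def by (simp add: field_simps)

definition E2 :: "nat \<Rightarrow> nat \<Rightarrow> bool" where "E2 u v = (u = 0 \<and> v = 1 \<or> u = 1 \<and> v = 0)"
definition N2 :: "nat \<Rightarrow> nat \<Rightarrow> nat" where "N2 k i = 4 * k + 2 ^ i"
definition w2 :: "nat \<Rightarrow> nat \<Rightarrow> real" where "w2 k i = real (N2 k i) / real (8 * k + 3)"

lemma gi2: "game_instance {0..<2} E2 (w2 k)"
proof -
  have sg: "simple_graph {0..<2} E2" unfolding simple_graph_def E2_def by auto
  have cn: "graph_connected {0..<2} E2"
  proof -
    have "E2 0 1" "E2 1 0" unfolding E2_def by auto
    hence "E2\<^sup>*\<^sup>* u v" if "u \<in> {0..<2}" "v \<in> {0..<2}" for u v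
      using that by (auto simp: less_2_cases_iff)
    thus ?thesis unfolding graph_connected_def by blast
  qed
  have "8 * k + 3 = sum (N2 k) {0..<2}" by (simp add: N2_def eval_nat_numeral)
  hence "game_instance {0..<2} E2 (\<lambda>i. real (N2 k i) / real (8 * k + 3))"
    by (intro gi_nat[OF sg cn _ _ _, of 2 4 _ "\<lambda>i. k"]) (auto simp: N2_def)
  thus ?thesis unfolding w2_def by simp
qed

lemma tree2: "is_tree {0..<2} E2"
proof -
  have cn: "graph_connected {0..<2} E2" using gi2 gi_conn by blast
  have "\<not> has_cycle {0..<2} E2"
  proof
    assume "has_cycle {0..<2} E2"
    then obtain xs where xs: "length xs \<ge> 3" "distinct xs" "set xs \<subseteq> {0..<2::nat}" unfolding has_cycle_def by blast
    have "card (set xs) = length xs" using xs(2) by (rule distinct_card)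
    moreover have "card (set xs) \<le> 2" using card_mono[OF _ xs(3)] by simp
    ultimately show False using xs(1) by simp
  qed
  thus ?thesis using cn unfolding is_tree_def by blast
qed

lemma value2: "game_value {0..<2} E2 (w2 k) \<le> real (4 * k + 2) / real (8 * k + 3)"
proof (rule value_le_ub[OF gi2])
  have m: "moves {0..<2} E2 {a} {} = {1 - a}" if "a < 2" for a
    using that unfolding moves_def E2_def by (auto simp: less_2_cases_iff)
  show "\<forall>a\<in>{0..<2}. ub (card {0..<2::nat} - 1) {0..<2} E2 (w2 k) (real (4 * k + 2) / real (8 * k + 3)) {a} {}"
  proof
    fix a :: nat assume a: "a \<in> {0..<2}"
    have "card {0..<2::nat} - 1 = Suc 0" by simp
    moreover have "w2 k a \<le> real (4 * k + 2) / real (8 * k + 3)"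
      using a unfolding w2_def N2_def by (auto simp: less_2_cases_iff divide_le_cancel)
    moreover have "\<not> w2 k a < 0" unfolding w2_def by (simp add: not_less)
    ultimately show "ub (card {0..<2::nat} - 1) {0..<2} E2 (w2 k) (real (4 * k + 2) / real (8 * k + 3)) {a} {}"
      using m[of a] a by simp
  qed
qed

lemma c2_bound: "k \<ge> 1 \<Longrightarrow> real (4 * k + 2) / real (8 * k + 3) \<le> 1/2 + 1 / real k"
  by (simp add: field_simps)



primrec ubg :: "nat \<Rightarrow> nat set \<Rightarrow> (nat \<Rightarrow> nat \<Rightarrow> bool) \<Rightarrow> (nat set \<Rightarrow> nat set \<Rightarrow> bool) \<Rightarrow> (nat set \<Rightarrow> bool) \<Rightarrow> nat set \<Rightarrow> nat set \<Rightarrow> bool" where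
  "ubg 0 V E lt lf F S = lf F"
| "ubg (Suc n) V E lt lf F S =
     (if moves V E F S = {} then lf F
      else if lt F S then (\<forall>v\<in>moves V E F S. ubg n V E lt lf (insert v F) S)
      else (\<exists>v\<in>moves V E F S. ubg n V E lt lf F (insert v S)))"

lemma ubg_ub:
  assumes lt: "\<And>A B. A \<subseteq> V \<Longrightarrow> B \<subseteq> V \<Longrightarrow> (sum w A < sum w B) = lt A B"
    and lf: "\<And>A. A \<subseteq> V \<Longrightarrow> (sum w A \<le> c) = lf A"
    and "F \<subseteq> V" "S \<subseteq> V" "ubg n V E lt lf F S"
  shows "ub n V E w c F S"
  using assms(3-5)
proof (induction n arbitrary: F S)
  case 0 thus ?case using lf by simp
next
  case (Suc n)
  have mv: "\<And>v. v \<in> moves V E F S \<Longrightarrow> v \<in> V" using moves_sub by blast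
  show ?case
  proof (cases "moves V E F S = {}")
    case True thus ?thesis using Suc.prems lf by simp
  next
    case False
    show ?thesis
    proof (cases "lt F S")
      case True
      hence "sum w F < sum w S" using lt Suc.prems by blast
      thus ?thesis using Suc.prems Suc.IH mv False True by auto
    next
      case f2: False
      hence nl: "\<not> sum w F < sum w S" using lt Suc.prems by blast
      obtain v where v: "v \<in> moves V E F S" "ubg n V E lt lf F (insert v S)" using Suc.prems(3) False f2 by auto
      have "ub n V E w c F (insert v S)" using Suc.IH[of F "insert v S"] Suc.prems mv[OF v(1)] v(2) by auto
      thus ?thesis using nl False v(1) by auto
    qed
  qed
qed

definition H6 :: "nat set \<Rightarrow> nat" where "H6 A = card (A \<inter> {2,3,4})"
definition R6 :: "nat set \<Rightarrow> nat" where "R6 A = sum (N6 0) A"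
definition lt6 :: "nat set \<Rightarrow> nat set \<Rightarrow> bool" where
  "lt6 A B = (H6 A < H6 B \<or> (H6 A = H6 B \<and> R6 A < R6 B))"
definition lf6 :: "nat set \<Rightarrow> bool" where
  "lf6 A = (H6 A = 0 \<or> (H6 A = 1 \<and> R6 A \<le> 4203))"

lemma N0_vals: "N6 0 0 = 641" "N6 0 1 = 1282" "N6 0 2 = 324" "N6 0 3 = 1416"
  "N6 0 4 = 16" "N6 0 5 = 864"
  by (simp_all add: N6_def P6_def)



definition mvl :: "nat list \<Rightarrow> (nat \<Rightarrow> nat \<Rightarrow> bool) \<Rightarrow> nat set \<Rightarrow> nat set \<Rightarrow> nat list" where
  "mvl vs E F S = filter (\<lambda>v. v \<notin> F \<and> v \<notin> S \<and> (\<exists>u\<in>F \<union> S. E u v)) vs"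

primrec ubl :: "nat \<Rightarrow> nat list \<Rightarrow> (nat \<Rightarrow> nat \<Rightarrow> bool) \<Rightarrow> (nat set \<Rightarrow> nat set \<Rightarrow> bool) \<Rightarrow> (nat set \<Rightarrow> bool) \<Rightarrow> nat set \<Rightarrow> nat set \<Rightarrow> bool" where
  "ubl 0 vs E lt lf F S = lf F"
| "ubl (Suc n) vs E lt lf F S =
     (if mvl vs E F S = [] then lf F
      else if lt F S then list_all (\<lambda>v. ubl n vs E lt lf (insert v F) S) (mvl vs E F S)
      else list_ex (\<lambda>v. ubl n vs E lt lf F (insert v S)) (mvl vs E F S))"

lemma moves_mvl: "moves (set vs) E F S = set (mvl vs E F S)"
  unfolding moves_def mvl_def by auto

lemma ubl_ubg: "ubl n vs E lt lf F S = ubg n (set vs) E lt lf F S"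
  by (induction n arbitrary: F S) (simp_all add: moves_mvl list_all_iff list_ex_iff)

lemma list_all_wcong[cong]: "xs = ys \<Longrightarrow> list_all P xs = list_all P ys" by simp
lemma list_ex_wcong[cong]: "xs = ys \<Longrightarrow> list_ex P xs = list_ex P ys" by simp
lemma filter_wcong[cong]: "xs = ys \<Longrightarrow> filter P xs = filter P ys" by simp


lemma N0_Suc0: "N6 0 (Suc 0) = 1282" by (simp add: N6_def P6_def)

lemma ubl6_all: "\<forall>a\<in>{0..<6}. ubl (Suc (Suc (Suc (Suc (Suc 0))))) [0,1,2,3,4,5] E6 lt6 lf6 {a} {}"
  by (simp add: mvl_def E6_def lt6_def lf6_def H6_def R6_def N0_vals N0_Suc0 atLeast0LessThan lessThan_nat_numeral)

lemma lex_lt: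
  fixes K h1 h2 r1 r2 :: nat
  assumes "r1 < K" "r2 < K"
  shows "(K * h1 + r1 < K * h2 + r2) = (h1 < h2 \<or> (h1 = h2 \<and> r1 < r2))"
proof (cases "h1 < h2")
  case True
  hence "K * (h1 + 1) \<le> K * h2" by (intro mult_le_mono2) simp
  hence "K * h1 + r1 < K * h2 + r2" using assms by (simp add: algebra_simps)
  thus ?thesis using True by simp
next
  case False
  show ?thesis
  proof (cases "h1 = h2")
    case True thus ?thesis by simp
  next
    case False
    hence "h2 < h1" using \<open>\<not> h1 < h2\<close> by simp
    hence "K * (h2 + 1) \<le> K * h1" by (intro mult_le_mono2) simp
    hence "\<not> K * h1 + r1 < K * h2 + r2" using assms by (simp add: algebra_simps)
    thus ?thesis using \<open>h2 < h1\<close> by simp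
  qed
qed

lemma lex_leaf:
  fixes K h r :: nat
  assumes "r \<le> 4543" "64000 \<le> K"
  shows "(K * h + r \<le> K + 4203) = (h = 0 \<or> (h = 1 \<and> r \<le> 4203))"
proof (cases "h \<ge> 2")
  case True
  hence "K * 2 \<le> K * h" by (intro mult_le_mono2)
  hence "\<not> (K * h + r \<le> K + 4203)" using assms by linarith
  thus ?thesis using True by auto
next
  case False
  hence "h = 0 \<or> h = 1" by auto
  thus ?thesis using assms by auto
qed

lemma N6_split: "N6 k i = N6 0 i + (if i \<in> {2,3,4} then 64 * k else 0)"
  by (simp add: N6_def P6_def)

lemma sumN6: "finite A \<Longrightarrow> sum (N6 k) A = 64 * k * H6 A + R6 A"
proof -
  assume fA: "finite A"
  have "sum (N6 k) A = R6 A + sum (\<lambda>i. if i \<in> {2,3,4} then 64 * k else 0) A"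
  proof -
    have "sum (N6 k) A = sum (\<lambda>i. N6 0 i + (if i \<in> {2,3,4} then 64 * k else 0)) A"
      by (intro sum.cong refl) (rule N6_split)
    thus ?thesis unfolding R6_def by (simp only: sum.distrib)
  qed
  also have "sum (\<lambda>i. if i \<in> {2,3,4} then 64 * k else 0) A = sum (\<lambda>i. 64 * k) (A \<inter> {2,3,4})"
    using sum.inter_restrict[OF fA, of "\<lambda>i. 64 * k" "{2,3,4}"] by simp
  also have "\<dots> = 64 * k * H6 A" unfolding H6_def by simp
  finally show ?thesis by simp
qed

lemma R6_le: "A \<subseteq> {0..<6} \<Longrightarrow> R6 A \<le> 4543"
proof -
  assume "A \<subseteq> {0..<6}"
  hence "R6 A \<le> sum (N6 0) {0..<6}" unfolding R6_def by (intro sum_mono2) auto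
  also have "\<dots> = 4543" by (simp add: N6_def P6_def eval_nat_numeral)
  finally show ?thesis .
qed

lemma value6: "k \<ge> 1000 \<Longrightarrow> game_value {0..<6} E6 (w6 k) \<le> c6 k"
proof -
  assume k: "k \<ge> 1000"
  have lt: "(sum (w6 k) A < sum (w6 k) B) = lt6 A B" if "A \<subseteq> {0..<6}" "B \<subseteq> {0..<6}" for A B
  proof -
    have f: "finite A" "finite B" using that finite_subset by blast+
    have "R6 A < 64 * k" "R6 B < 64 * k" using R6_le[OF that(1)] R6_le[OF that(2)] k by linarith+
    thus ?thesis unfolding w6_less sumN6[OF f(1)] sumN6[OF f(2)] lt6_def using lex_lt by presburger
  qed
  have lf: "(sum (w6 k) A \<le> c6 k) = lf6 A" if "A \<subseteq> {0..<6}" for A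
  proof -
    have f: "finite A" using that finite_subset by blast
    have "64000 \<le> 64 * k" using k by simp
    thus ?thesis unfolding w6_le_c sumN6[OF f] lf6_def using lex_leaf[OF R6_le[OF that]] by simp
  qed
  have V: "set [0,1,2,3,4,5] = {0..<6::nat}" by auto
  show ?thesis
  proof (rule value_le_ub[OF gi6])
    have c: "card {0..<6::nat} - 1 = Suc (Suc (Suc (Suc (Suc 0))))" by simp
    show "\<forall>a\<in>{0..<6}. ub (card {0..<6::nat} - 1) {0..<6} E6 (w6 k) (c6 k) {a} {}"
    proof
      fix a :: nat assume a: "a \<in> {0..<6}"
      have "ubg (Suc (Suc (Suc (Suc (Suc 0))))) {0..<6} E6 lt6 lf6 {a} {}"
        using ubl6_all a unfolding ubl_ubg V by blast
      note u = this
      show "ub (card {0..<6::nat} - 1) {0..<6} E6 (w6 k) (c6 k) {a} {}"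
        unfolding c using a by (intro ubg_ub[OF lt lf _ _ u]) auto
    qed
  qed
qed

theorem theorem1:
  shows "Inf {game_value V E w | V E w. game_instance V E w} = 1/3 \<and>
         Inf {game_value V E w | V E w. game_instance V E w \<and> is_tree V E} = 1/2"
proof
  show "Inf {game_value V E w | V E w. game_instance V E w} = 1/3"
  proof (rule cInf_eq_non_empty)
    show "{game_value V E w | V E w. game_instance V E w} \<noteq> {}" using gi6 by blast
  next
    fix x assume "x \<in> {game_value V E w | V E w. game_instance V E w}"
    thus "1/3 \<le> x" using value_gt_third by fastforce
  next
    fix y assume y: "\<And>x. x \<in> {game_value V E w | V E w. game_instance V E w} \<Longrightarrow> y \<le> x"
    show "y \<le> 1/3"
    proof (rule ccontr)
      assume "\<not> y \<le> 1/3"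
      hence d: "y - 1/3 > 0" by simp
      define k where "k = nat \<lceil>15 / (y - 1/3)\<rceil> + 1000"
      have k1: "k \<ge> 1000" unfolding k_def by simp
      have "15 / (y - 1/3) \<le> real (nat \<lceil>15 / (y - 1/3)\<rceil>)" by linarith
      hence "15 / (y - 1/3) < real k" unfolding k_def by simp
      hence "15 < real k * (y - 1/3)" using d by (simp add: field_simps)
      hence "15 / real k < y - 1/3" using k1 by (simp add: field_simps)
      moreover have "game_value {0..<6} E6 (w6 k) \<le> 1/3 + 15 / real k"
        using value6[OF k1] c6_bound[of k] k1 by linarith
      moreover have "y \<le> game_value {0..<6} E6 (w6 k)" using y gi6 by blast
      ultimately show False by linarith
    qed
  qed
next
  show "Inf {game_value V E w | V E w. game_instance V E w \<and> is_tree V E} = 1/2"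
  proof (rule cInf_eq_non_empty)
    show "{game_value V E w | V E w. game_instance V E w \<and> is_tree V E} \<noteq> {}" using gi2 tree2 by blast
  next
    fix x assume "x \<in> {game_value V E w | V E w. game_instance V E w \<and> is_tree V E}"
    thus "1/2 \<le> x" using tree_value by fastforce
  next
    fix y assume y: "\<And>x. x \<in> {game_value V E w | V E w. game_instance V E w \<and> is_tree V E} \<Longrightarrow> y \<le> x"
    show "y \<le> 1/2"
    proof (rule ccontr)
      assume "\<not> y \<le> 1/2"
      hence d: "y - 1/2 > 0" by simp
      define k where "k = nat \<lceil>1 / (y - 1/2)\<rceil> + 1"
      have k1: "k \<ge> 1" unfolding k_def by simp
      have "1 / (y - 1/2) \<le> real (nat \<lceil>1 / (y - 1/2)\<rceil>)" by linarith
      hence "1 / (y - 1/2) < real k" unfolding k_def by simp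
      hence "1 < real k * (y - 1/2)" using d by (simp add: field_simps)
      hence "1 / real k < y - 1/2" using k1 by (simp add: field_simps)
      moreover have "game_value {0..<2} E2 (w2 k) \<le> 1/2 + 1 / real k"
        using value2[of k] c2_bound[of k] k1 by linarith
      moreover have "y \<le> game_value {0..<2} E2 (w2 k)" using y gi2 tree2 by blast
      ultimately show False by linarith
    qed
  qed
qed

end
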